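(* Let $\lambda,\mu>0$, let $X$ be the stationary birth–death process with rates $\lambda_n=\lambda$, $\mu_n=\mu n$ (marginal Poisson with mean $\lambda/\mu$), and $\Lambda(t)=\exp\{X(t)-\frac{\lambda}{\mu}(e-1)\}$. Then there is a constant $c>0$ such that for all $\tau\in\mathbb{R}$, $$c\,e^{-\mu|\tau|}\le \operatorname{Cov}(\Lambda(t),\Lambda(t+\tau))\le \operatorname{Var}(\Lambda(0))\,e^{-\mu|\tau|}.$$
   Context: The birth–death process is started in its stationary (Poisson) distribution, so $\Lambda$ is strictly stationary. *)

theory Defs
  imports "HOL-Probability.Probability"
begin

definition bd_Q :: "real \<Rightarrow> real \<Rightarrow> nat \<Rightarrow> nat \<Rightarrow> real" where
  "bd_Q lam mu i j =
     (if j = Suc i then lam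
      else if Suc j = i then mu * real i
      else if j = i then - (lam + mu * real i)
      else 0)"

definition is_transition_function_of ::
    "(real \<Rightarrow> nat \<Rightarrow> nat \<Rightarrow> real) \<Rightarrow> (nat \<Rightarrow> nat \<Rightarrow> real) \<Rightarrow> bool" where
  "is_transition_function_of P Q \<longleftrightarrow>
     (\<forall>t\<ge>0. \<forall>i j. 0 \<le> P t i j) \<and>
     (\<forall>t\<ge>0. \<forall>i. (\<lambda>j. P t i j) sums 1) \<and>
     (\<forall>i j. P 0 i j = (if i = j then 1 else 0)) \<and>
     (\<forall>s\<ge>0. \<forall>t\<ge>0. \<forall>i j. (\<lambda>k. P s i k * P t k j) sums P (s + t) i j) \<and>
     (\<forall>i j. ((\<lambda>h. P h i j) has_real_derivative Q i j) (at 0 within {0..}))"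

text \<open>X is a time-homogeneous Markov process on M with transition function P,
  started in the distribution pi0 at every time (stationary): all finite-dimensional
  distributions are given by pi0 and P.\<close>
definition stationary_markov_process ::
    "'a measure \<Rightarrow> (real \<Rightarrow> 'a \<Rightarrow> nat) \<Rightarrow> (nat \<Rightarrow> real)
       \<Rightarrow> (real \<Rightarrow> nat \<Rightarrow> nat \<Rightarrow> real) \<Rightarrow> bool" where
  "stationary_markov_process M X pi0 P \<longleftrightarrow>
     (\<forall>t. X t \<in> measurable M (count_space UNIV)) \<and>
     (\<forall>t ds ss. (\<forall>d\<in>set ds. 0 \<le> d) \<longrightarrow> length ss = Suc (length ds) \<longrightarrow>
        measure M {\<omega> \<in> space M. \<forall>k<length ss. X (t + sum_list (take k ds)) \<omega> = ss ! k}
          = pi0 (ss ! 0) * (\<Prod>k<length ds. P (ds ! k) (ss ! k) (ss ! Suc k)))"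

definition bd_Lambda :: "real \<Rightarrow> real \<Rightarrow> (real \<Rightarrow> 'a \<Rightarrow> nat) \<Rightarrow> real \<Rightarrow> 'a \<Rightarrow> real" where
  "bd_Lambda lam mu X t \<omega> = exp (real (X t \<omega>) - (lam / mu) * (exp 1 - 1))"

definition covariance :: "'a measure \<Rightarrow> ('a \<Rightarrow> real) \<Rightarrow> ('a \<Rightarrow> real) \<Rightarrow> real" where
  "covariance M f g =
     integral\<^sup>L M (\<lambda>\<omega>. (f \<omega> - integral\<^sup>L M f) * (g \<omega> - integral\<^sup>L M g))"

definition variance_of :: "'a measure \<Rightarrow> ('a \<Rightarrow> real) \<Rightarrow> real" where
  "variance_of M f = integral\<^sup>L M (\<lambda>\<omega>. (f \<omega> - integral\<^sup>L M f)\<^sup>2)"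

end

theory Submission
  imports Defs
begin

lemma suminf_swap_nonneg:
  fixes f :: "nat \<Rightarrow> nat \<Rightarrow> real"
  assumes nn: "\<And>k j. 0 \<le> f k j" and s1: "\<And>k. summable (f k)"
    and s2: "summable (\<lambda>k. \<Sum>j. f k j)"
  shows "summable (\<lambda>j. \<Sum>k. f k j)" "(\<Sum>j. \<Sum>k. f k j) = (\<Sum>k. \<Sum>j. f k j)"
proof -
  have A: "(\<Sum>k. ennreal (\<Sum>j. f k j)) = ennreal (\<Sum>k. \<Sum>j. f k j)"
    by (rule suminf_ennreal2) (use nn s2 in \<open>auto intro: suminf_nonneg s1\<close>)
  have B: "\<And>k. ennreal (\<Sum>j. f k j) = (\<Sum>j. ennreal (f k j))"
    by (rule suminf_ennreal2[symmetric]) (use nn s1 in auto)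
  have "(\<Sum>j. \<Sum>k. ennreal (f k j)) = (\<Sum>k. \<Sum>j. ennreal (f k j))"
  proof -
    have "(\<Sum>j. \<Sum>k. ennreal (f k j)) = (\<integral>\<^sup>+j. (\<Sum>k. ennreal (f k j)) \<partial>count_space UNIV)"
      by (simp add: nn_integral_count_space_nat)
    also have "\<dots> = (\<Sum>k. \<integral>\<^sup>+j. ennreal (f k j) \<partial>count_space UNIV)"
      by (rule nn_integral_suminf) auto
    also have "\<dots> = (\<Sum>k. \<Sum>j. ennreal (f k j))"
      by (simp add: nn_integral_count_space_nat)
    finally show ?thesis .
  qed
  also have "\<dots> = ennreal (\<Sum>k. \<Sum>j. f k j)" using A B by simp
  finally have C: "(\<Sum>j. \<Sum>k. ennreal (f k j)) = ennreal (\<Sum>k. \<Sum>j. f k j)" .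
  have inner: "\<And>j. summable (\<lambda>k. f k j)"
  proof -
    fix j
    have "(\<Sum>k. ennreal (f k j)) \<le> (\<Sum>j. \<Sum>k. ennreal (f k j))"
      using sum_le_suminf[OF summableI, of "{j}" "\<lambda>j. \<Sum>k. ennreal (f k j)"] by simp
    also have "\<dots> < top" using C by simp
    finally show "summable (\<lambda>k. f k j)"
      by (intro summable_suminf_not_top) (use nn in auto)
  qed
  have D: "(\<Sum>j. \<Sum>k. ennreal (f k j)) = (\<Sum>j. ennreal (\<Sum>k. f k j))"
    by (intro suminf_cong suminf_ennreal2) (use nn inner in auto)
  have E: "(\<Sum>j. ennreal (\<Sum>k. f k j)) \<noteq> top" using C D by simp
  show S: "summable (\<lambda>j. \<Sum>k. f k j)"
    by (rule summable_suminf_not_top) (use E nn in \<open>auto intro: suminf_nonneg inner\<close>)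
  have F: "ennreal (\<Sum>j. \<Sum>k. f k j) = (\<Sum>j. ennreal (\<Sum>k. f k j))"
    by (rule suminf_ennreal2[symmetric]) (use nn inner S in \<open>auto intro: suminf_nonneg\<close>)
  have "ennreal (\<Sum>j. \<Sum>k. f k j) = ennreal (\<Sum>k. \<Sum>j. f k j)"
    using C D F by simp
  moreover have "0 \<le> (\<Sum>j. \<Sum>k. f k j)" by (intro suminf_nonneg S) (use nn inner in \<open>auto intro: suminf_nonneg\<close>)
  moreover have "0 \<le> (\<Sum>k. \<Sum>j. f k j)" by (intro suminf_nonneg s2) (use nn s1 in \<open>auto intro: suminf_nonneg\<close>)
  ultimately show "(\<Sum>j. \<Sum>k. f k j) = (\<Sum>k. \<Sum>j. f k j)" by simp
qed

lemma qsum: "(\<Sum>k\<le>Suc i. bd_Q lam mu i k * x k)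
   = lam * x (Suc i) + mu * real i * x (i - 1) - (lam + mu * real i) * x i"
proof (cases i)
  case 0 then show ?thesis by (simp add: bd_Q_def algebra_simps)
next
  case (Suc m)
  have "(\<Sum>k\<le>Suc i. bd_Q lam mu i k * x k) = (\<Sum>k<m. bd_Q lam mu i k * x k)
     + bd_Q lam mu i m * x m + bd_Q lam mu i i * x i + bd_Q lam mu i (Suc i) * x (Suc i)"
    using Suc by (simp add: atMost_Suc lessThan_Suc algebra_simps sum.atMost_Suc_shift
        flip: lessThan_Suc_atMost)
  also have "(\<Sum>k<m. bd_Q lam mu i k * x k) = 0"
    using Suc by (intro sum.neutral) (auto simp: bd_Q_def)
  finally show ?thesis using Suc by (simp add: bd_Q_def algebra_simps)
qed

lemma qsum0: "(\<Sum>k<Suc (Suc i). bd_Q lam mu i k) = 0"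
  using qsum[of lam mu i "\<lambda>_. 1"] by (simp add: lessThan_Suc_atMost algebra_simps)

lemma q_offdiag_nonneg: "lam > 0 \<Longrightarrow> mu > 0 \<Longrightarrow> k \<noteq> i \<Longrightarrow> 0 \<le> bd_Q lam mu i k"
  by (simp add: bd_Q_def)

locale bdp =
  fixes P :: "real \<Rightarrow> nat \<Rightarrow> nat \<Rightarrow> real" and lam mu :: real
  assumes TF: "is_transition_function_of P (bd_Q lam mu)" and lam: "lam > 0" and mu: "mu > 0"
begin

abbreviation "q \<equiv> bd_Q lam mu"

lemma nonneg: "t \<ge> 0 \<Longrightarrow> 0 \<le> P t i j"
  using TF unfolding is_transition_function_of_def by blast
lemma rows: "t \<ge> 0 \<Longrightarrow> (\<lambda>j. P t i j) sums 1"
  using TF unfolding is_transition_function_of_def by blast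
lemma P0: "P 0 i j = (if i = j then 1 else 0)"
  using TF unfolding is_transition_function_of_def by blast
lemma CK: "s \<ge> 0 \<Longrightarrow> t \<ge> 0 \<Longrightarrow> (\<lambda>k. P s i k * P t k j) sums P (s + t) i j"
  using TF unfolding is_transition_function_of_def by blast
lemma der: "((\<lambda>h. P h i j) has_real_derivative q i j) (at 0 within {0..})"
  using TF unfolding is_transition_function_of_def by blast

lemma rows_summable: "t \<ge> 0 \<Longrightarrow> summable (\<lambda>j. P t i j)"
  using rows sums_summable by blast
lemma rows_sum: "t \<ge> 0 \<Longrightarrow> (\<Sum>j. P t i j) = 1"
  using rows sums_unique by fastforce

lemma le1: "t \<ge> 0 \<Longrightarrow> P t i j \<le> 1"
  using sum_le_suminf[OF rows_summable, of t "{j}" i] nonneg rows_sum by auto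

lemma quot: "((\<lambda>h. (P h i j - (if i = j then 1 else 0)) / h) \<longlongrightarrow> q i j) (at_right 0)"
proof -
  have "((\<lambda>y. (P y i j - P 0 i j) / (y - 0)) \<longlongrightarrow> q i j) (at 0 within {0..})"
    using der[of i j] unfolding has_field_derivative_iff .
  then have "((\<lambda>y. (P y i j - P 0 i j) / (y - 0)) \<longlongrightarrow> q i j) (at 0 within {0<..})"
    by (rule tendsto_within_subset) auto
  then show ?thesis by (simp add: P0)
qed

lemma diag_lim: "((\<lambda>h. P h i i) \<longlongrightarrow> 1) (at_right 0)"
proof -
  have "continuous (at 0 within {0..}) (\<lambda>h. P h i i)"
    using DERIV_continuous[OF der] .
  then have "((\<lambda>h. P h i i) \<longlongrightarrow> P 0 i i) (at 0 within {0..})"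
    by (simp add: continuous_within)
  then have "((\<lambda>h. P h i i) \<longlongrightarrow> P 0 i i) (at 0 within {0<..})"
    by (rule tendsto_within_subset) auto
  then show ?thesis by (simp add: P0)
qed

end

context bdp begin

definition U :: "real \<Rightarrow> real \<Rightarrow> nat \<Rightarrow> real" where
  "U z t i = (\<Sum>j. P t i j * z ^ j)"

context
  fixes z :: real assumes z0: "0 \<le> z" and z1: "z \<le> 1"
begin

lemma U_summable: "t \<ge> 0 \<Longrightarrow> summable (\<lambda>j. P t i j * z ^ j)"
  by (rule summable_comparison_test'[OF rows_summable[of t i], of 0])
     (use z0 z1 nonneg in \<open>auto simp: abs_mult intro!: mult_left_le power_le_one\<close>)

lemma U_nonneg: "t \<ge> 0 \<Longrightarrow> 0 \<le> U z t i"
  unfolding U_def by (intro suminf_nonneg U_summable) (use z0 nonneg in auto)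

lemma U_le1: "t \<ge> 0 \<Longrightarrow> U z t i \<le> 1"
proof -
  assume t: "t \<ge> 0"
  have "U z t i \<le> (\<Sum>j. P t i j)" unfolding U_def
    by (intro suminf_le U_summable rows_summable t)
       (use z0 z1 nonneg t in \<open>auto intro!: mult_left_le power_le_one\<close>)
  then show ?thesis using rows_sum t by simp
qed

lemma U0: "U z 0 i = z ^ i"
proof -
  have "(\<lambda>j. P 0 i j * z ^ j) = (\<lambda>j. if j = i then z ^ j else 0)"
    by (auto simp: P0)
  then show ?thesis unfolding U_def using sums_single[of i "\<lambda>j. z ^ j"] sums_unique by force
qed

lemma U_CK:
  assumes h: "h \<ge> 0" and s: "s \<ge> 0"
  shows "summable (\<lambda>k. P h i k * U z s k)" "U z (h + s) i = (\<Sum>k. P h i k * U z s k)"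
proof -
  define f where "f k j = P h i k * (P s k j * z ^ j)" for k j
  have nn: "\<And>k j. 0 \<le> f k j" unfolding f_def using h s z0 nonneg by auto
  have s1: "\<And>k. summable (f k)" unfolding f_def by (intro summable_mult U_summable s)
  have fk: "\<And>k. (\<Sum>j. f k j) = P h i k * U z s k"
    unfolding f_def U_def by (intro suminf_mult U_summable s)
  show S: "summable (\<lambda>k. P h i k * U z s k)"
    by (rule summable_comparison_test'[OF rows_summable[of h i], of 0])
       (use h s nonneg U_nonneg U_le1 in \<open>auto simp: abs_mult intro!: mult_left_le\<close>)
  have s2: "summable (\<lambda>k. \<Sum>j. f k j)" using S by (simp add: fk)
  have "(\<Sum>j. \<Sum>k. f k j) = (\<Sum>k. \<Sum>j. f k j)" by (rule suminf_swap_nonneg(2)[OF nn s1 s2])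
  moreover have "(\<Sum>k. f k j) = P (h + s) i j * z ^ j" for j
    unfolding f_def using sums_mult2[OF CK[OF h s, of i j], of "z ^ j"]
    by (simp add: sums_unique[symmetric] mult.assoc)
  ultimately have "(\<Sum>j. P (h + s) i j * z ^ j) = (\<Sum>k. \<Sum>j. f k j)" by simp
  then show "U z (h + s) i = (\<Sum>k. P h i k * U z s k)"
    by (simp only: U_def fk)
qed

lemma U_bound:
  assumes h: "h \<ge> 0" and s: "s \<ge> 0"
  shows "\<bar>U z (h + s) i - U z s i\<bar> \<le> 1 - P h i i"
proof -
  have S: "summable (\<lambda>k. P h i k * U z s k)" and E: "U z (h + s) i = (\<Sum>k. P h i k * U z s k)"
    using U_CK[OF h s] by auto
  have R: "(\<lambda>k. P h i k * U z s i) sums (1 * U z s i)" by (rule sums_mult2[OF rows[OF h]])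
  have D: "(\<lambda>k. P h i k * (U z s k - U z s i)) sums (U z (h + s) i - U z s i)"
    using sums_diff[OF summable_sums[OF S] R] E by (simp add: algebra_simps)
  have G: "(\<lambda>k. if k = i then 0 else P h i k) sums (1 - P h i i)"
  proof -
    have "(\<lambda>k. P h i k - (if k = i then P h i i else 0)) sums (1 - P h i i)"
      by (rule sums_diff[OF rows[OF h] sums_single])
    moreover have "(\<lambda>k. P h i k - (if k = i then P h i i else 0)) = (\<lambda>k. if k = i then 0 else P h i k)"
      by auto
    ultimately show ?thesis by simp
  qed
  have B: "\<And>k. \<bar>P h i k * (U z s k - U z s i)\<bar> \<le> (if k = i then 0 else P h i k)"
  proof -
    fix k
    have "\<bar>U z s k - U z s i\<bar> \<le> 1" using U_nonneg[OF s, of k] U_le1[OF s, of k] U_nonneg[OF s, of i] U_le1[OF s, of i]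
      by (auto simp: abs_le_iff)
    then show "\<bar>P h i k * (U z s k - U z s i)\<bar> \<le> (if k = i then 0 else P h i k)"
      using nonneg[OF h, of i k] by (auto simp: abs_mult intro: mult_left_le)
  qed
  have Sabs: "summable (\<lambda>k. \<bar>P h i k * (U z s k - U z s i)\<bar>)"
    by (rule summable_comparison_test'[OF sums_summable[OF G], of 0]) (use B in auto)
  have "\<bar>U z (h + s) i - U z s i\<bar> \<le> (\<Sum>k. \<bar>P h i k * (U z s k - U z s i)\<bar>)"
    using summable_rabs[OF Sabs] sums_unique[OF D] by simp
  also have "\<dots> \<le> (\<Sum>k. if k = i then 0 else P h i k)"
    by (rule suminf_le[OF B]) (use B sums_summable[OF G] in \<open>auto intro: summable_comparison_test'\<close>)
  also have "\<dots> = 1 - P h i i" using G sums_unique by fastforce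
  finally show ?thesis .
qed

end

lemma gen_deriv:
  fixes v :: "real \<Rightarrow> nat \<Rightarrow> real"
  assumes lim: "\<And>k. ((\<lambda>h. v h k) \<longlongrightarrow> v0 k) (at_right 0)"
    and bd: "eventually (\<lambda>h. \<forall>k. \<bar>v h k\<bar> \<le> 1) (at_right 0)"
  shows "((\<lambda>h. ((\<Sum>k. P h i k * v h k) - v h i) / h) \<longlongrightarrow> (\<Sum>k\<le>Suc i. q i k * v0 k)) (at_right 0)"
proof -
  define n where "n = Suc (Suc i)"
  have iin: "i < n" unfolding n_def by simp
  define T where "T h = (\<Sum>k. P h i (k + n) * v h (k + n))" for h
  define R where "R h = - (\<Sum>k<n. (P h i k - (if i = k then 1 else 0)) / h)" for h
  have ev: "eventually (\<lambda>h. ((\<Sum>k. P h i k * v h k) - v h i) / h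
      = (\<Sum>k<n. (P h i k - (if i = k then 1 else 0)) / h * v h k) + T h / h
      \<and> \<bar>T h / h\<bar> \<le> R h) (at_right 0)"
    using bd eventually_at_right_less[of 0]
  proof eventually_elim
    case (elim h)
    then have h: "h > 0" "\<And>k. \<bar>v h k\<bar> \<le> 1" by auto
    have Sm: "summable (\<lambda>k. P h i k * v h k)"
      by (rule summable_comparison_test'[OF rows_summable[of h i], of 0])
         (use h nonneg[of h] in \<open>auto simp: abs_mult intro!: mult_left_le\<close>)
    have sp: "(\<Sum>k. P h i k * v h k) = T h + (\<Sum>k<n. P h i k * v h k)"
      unfolding T_def by (rule suminf_split_initial_segment[OF Sm])
    have vi: "v h i = (\<Sum>k<n. (if i = k then 1 else 0) * v h k)"
    proof -
      have "(\<Sum>k<n. (if i = k then 1 else 0) * v h k) = (\<Sum>k<n. if i = k then v h k else 0)"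
        by (intro sum.cong) auto
      also have "\<dots> = v h i" using iin by simp
      finally show ?thesis by simp
    qed
    have eq1: "((\<Sum>k. P h i k * v h k) - v h i) / h
      = (\<Sum>k<n. (P h i k - (if i = k then 1 else 0)) / h * v h k) + T h / h"
    proof -
      have "(\<Sum>k<n. (P h i k - (if i = k then 1 else 0)) / h * v h k)
          = (\<Sum>k<n. (P h i k * v h k - (if i = k then 1 else 0) * v h k) / h)"
        by (intro sum.cong) (auto simp: algebra_simps diff_divide_distrib)
      also have "\<dots> = ((\<Sum>k<n. P h i k * v h k) - (\<Sum>k<n. (if i = k then 1 else 0) * v h k)) / h"
        by (simp add: sum_divide_distrib[symmetric] sum_subtractf)
      finally show ?thesis unfolding sp vi
        by (simp add: add_divide_distrib diff_divide_distrib)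
    qed
    have rs: "summable (\<lambda>k. P h i (k + n))"
      using rows_summable[of h i] h summable_ignore_initial_segment by auto
    have Tb: "\<bar>T h\<bar> \<le> (\<Sum>k. P h i (k + n))"
    proof -
      have a: "\<And>k. \<bar>P h i (k + n) * v h (k + n)\<bar> \<le> P h i (k + n)"
        using h nonneg[of h] by (auto simp: abs_mult intro!: mult_left_le)
      have sa: "summable (\<lambda>k. \<bar>P h i (k + n) * v h (k + n)\<bar>)"
        by (rule summable_comparison_test'[OF rs, of 0]) (use a in auto)
      have "\<bar>T h\<bar> \<le> (\<Sum>k. \<bar>P h i (k + n) * v h (k + n)\<bar>)"
        unfolding T_def by (rule summable_rabs[OF sa])
      also have "\<dots> \<le> (\<Sum>k. P h i (k + n))" by (rule suminf_le[OF a sa rs])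
      finally show ?thesis .
    qed
    have "(\<Sum>k. P h i (k + n)) = 1 - (\<Sum>k<n. P h i k)"
      using suminf_split_initial_segment[OF rows_summable[of h i], of n] rows_sum[of h i] h by simp
    also have "\<dots> = - (\<Sum>k<n. (P h i k - (if i = k then 1 else 0)))"
      using iin by (simp add: sum_subtractf)
    also have "\<dots> = h * R h"
      unfolding R_def using h by (simp add: sum_divide_distrib[symmetric])
    finally have "\<bar>T h\<bar> \<le> h * R h" using Tb by simp
    then have "\<bar>T h / h\<bar> \<le> R h" using h by (simp add: abs_divide pos_divide_le_eq mult.commute)
    with eq1 show ?case by blast
  qed
  have L1: "((\<lambda>h. \<Sum>k<n. (P h i k - (if i = k then 1 else 0)) / h * v h k) \<longlongrightarrow> (\<Sum>k<n. q i k * v0 k)) (at_right 0)"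
    by (intro tendsto_intros quot lim)
  have "(R \<longlongrightarrow> - (\<Sum>k<n. q i k)) (at_right 0)"
    unfolding R_def by (intro tendsto_intros quot)
  then have LR: "(R \<longlongrightarrow> 0) (at_right 0)" using qsum0[of lam mu i] unfolding n_def by (simp only: minus_zero)
  have LT: "((\<lambda>h. T h / h) \<longlongrightarrow> 0) (at_right 0)"
    by (rule Lim_null_comparison[OF _ LR]) (use ev in \<open>auto elim: eventually_mono\<close>)
  have "((\<lambda>h. (\<Sum>k<n. (P h i k - (if i = k then 1 else 0)) / h * v h k) + T h / h)
      \<longlongrightarrow> (\<Sum>k<n. q i k * v0 k) + 0) (at_right 0)"
    by (rule tendsto_add[OF L1 LT])
  then have "((\<lambda>h. ((\<Sum>k. P h i k * v h k) - v h i) / h) \<longlongrightarrow> (\<Sum>k<n. q i k * v0 k)) (at_right 0)"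
    by (subst tendsto_cong) (use ev in \<open>auto elim: eventually_mono\<close>)
  then show ?thesis unfolding n_def by (simp add: lessThan_Suc_atMost)
qed

end

lemma ev_lt: "0 < (s::real) \<Longrightarrow> eventually (\<lambda>h. h < s) (at_right 0)"
  by (subst eventually_at_right[of 0 s]) auto

context bdp begin
context
  fixes z :: real assumes z0: "0 \<le> z" and z1: "z \<le> 1"
begin

lemma U_bound2: "t \<ge> 0 \<Longrightarrow> s \<ge> 0 \<Longrightarrow> \<bar>U z t i - U z s i\<bar> \<le> 1 - P \<bar>t - s\<bar> i i"
proof -
  assume t: "t \<ge> 0" and s: "s \<ge> 0"
  show ?thesis
  proof (cases "s \<le> t")
    case True
    then show ?thesis using U_bound[OF z0 z1, of "t - s" s i] s by simp
  next
    case False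
    then show ?thesis using U_bound[OF z0 z1, of "s - t" t i] t by (simp add: abs_minus_commute)
  qed
qed

lemma U_cont: assumes s: "s \<ge> 0" shows "((\<lambda>t. U z t i) \<longlongrightarrow> U z s i) (at s within {0..})"
proof -
  have fl: "filterlim (\<lambda>t. \<bar>t - s\<bar>) (at_right 0) (at s within {0..})"
    unfolding filterlim_at
  proof
    show "\<forall>\<^sub>F x in at s within {0..}. \<bar>x - s\<bar> \<in> {0<..} \<and> \<bar>x - s\<bar> \<noteq> 0"
      by (auto simp: eventually_at_filter)
    have "((\<lambda>t. \<bar>t - s\<bar>) \<longlongrightarrow> \<bar>s - s\<bar>) (at s within {0..})"
      by (intro tendsto_intros)
    then show "((\<lambda>t. \<bar>t - s\<bar>) \<longlongrightarrow> 0) (at s within {0..})" by simp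
  qed
  have "((\<lambda>t. P \<bar>t - s\<bar> i i) \<longlongrightarrow> 1) (at s within {0..})"
    by (rule filterlim_compose[OF diag_lim fl])
  then have g: "((\<lambda>t. 1 - P \<bar>t - s\<bar> i i) \<longlongrightarrow> 0) (at s within {0..})"
    using tendsto_diff[OF tendsto_const[of 1]] by fastforce
  have "((\<lambda>t. U z t i - U z s i) \<longlongrightarrow> 0) (at s within {0..})"
    by (rule Lim_null_comparison[OF _ g]) (use U_bound2 s in \<open>auto simp: eventually_at_filter\<close>)
  then show ?thesis by (rule LIM_zero_cancel)
qed

lemma U_contin: "continuous_on {0..} (\<lambda>t. U z t i)"
  unfolding continuous_on_def using U_cont by auto

lemma U_deriv:
  assumes s: "s > 0"
  shows "((\<lambda>t. U z t i) has_real_derivative (\<Sum>k\<le>Suc i. q i k * U z s k)) (at s)"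
  unfolding DERIV_def filterlim_at_split
proof
  have "((\<lambda>h. ((\<Sum>k. P h i k * U z s k) - U z s i) / h) \<longlongrightarrow> (\<Sum>k\<le>Suc i. q i k * U z s k)) (at_right 0)"
    by (rule gen_deriv) (use U_nonneg[OF z0 z1] U_le1[OF z0 z1] s in auto)
  then show "((\<lambda>h. (U z (s + h) i - U z s i) / h) \<longlongrightarrow> (\<Sum>k\<le>Suc i. q i k * U z s k)) (at_right 0)"
  proof (rule Lim_transform_eventually)
    show "\<forall>\<^sub>F h in at_right 0. ((\<Sum>k. P h i k * U z s k) - U z s i) / h = (U z (s + h) i - U z s i) / h"
      using eventually_at_right_less[of 0]
      by eventually_elim (use U_CK(2)[OF z0 z1, of _ s i] s in \<open>auto simp: add.commute\<close>)
  qed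
next
  have lim: "((\<lambda>h. U z (s - h) k) \<longlongrightarrow> U z s k) (at_right 0)" for k
  proof -
    have "filterlim (\<lambda>h. s - h) (at s within {0..}) (at_right 0)"
      unfolding filterlim_at
    proof
      show "\<forall>\<^sub>F x in at_right 0. s - x \<in> {0..} \<and> s - x \<noteq> s"
        using eventually_at_right_less[of 0] ev_lt[OF s]
        by eventually_elim auto
      have "((\<lambda>h. s - h) \<longlongrightarrow> s - 0) (at_right 0)" by (intro tendsto_intros)
      then show "((\<lambda>h. s - h) \<longlongrightarrow> s) (at_right 0)" by simp
    qed
    then show ?thesis by (rule filterlim_compose[OF U_cont[OF less_imp_le[OF s]]])
  qed
  have bd: "\<forall>\<^sub>F h in at_right 0. \<forall>k. \<bar>U z (s - h) k\<bar> \<le> 1"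
    using ev_lt[OF s]
    by eventually_elim (use U_nonneg[OF z0 z1] U_le1[OF z0 z1] in \<open>auto simp: abs_le_iff\<close>)
  have "((\<lambda>h. ((\<Sum>k. P h i k * U z (s - h) k) - U z (s - h) i) / h) \<longlongrightarrow> (\<Sum>k\<le>Suc i. q i k * U z s k)) (at_right 0)"
    by (rule gen_deriv[OF lim bd])
  then have "((\<lambda>h. (U z (s + - h) i - U z s i) / - h) \<longlongrightarrow> (\<Sum>k\<le>Suc i. q i k * U z s k)) (at_right 0)"
  proof (rule Lim_transform_eventually)
    show "\<forall>\<^sub>F h in at_right 0. ((\<Sum>k. P h i k * U z (s - h) k) - U z (s - h) i) / h = (U z (s + - h) i - U z s i) / - h"
      using eventually_at_right_less[of 0] ev_lt[OF s]
    proof eventually_elim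
      case (elim h)
      then have "U z (h + (s - h)) i = (\<Sum>k. P h i k * U z (s - h) k)"
        using U_CK(2)[OF z0 z1, of h "s - h" i] by auto
      then show ?case by (simp add: divide_simps)
    qed
  qed
  then show "((\<lambda>h. (U z (s + h) i - U z s i) / h) \<longlongrightarrow> (\<Sum>k\<le>Suc i. q i k * U z s k)) (at_left 0)"
    unfolding filterlim_at_left_to_right[of _ _ 0] by simp
qed

end
end

lemma dirichlet:
  fixes x pp :: "nat \<Rightarrow> real"
  assumes db: "\<And>i. pp (Suc i) * (mu * real (Suc i)) = lam * pp i"
  shows "(\<Sum>i<Suc n. pp i * x i * (lam * x (Suc i) + mu * real i * x (i - 1) - (lam + mu * real i) * x i))
     = - lam * (\<Sum>i<n. pp i * (x (Suc i) - x i)^2) + lam * pp n * x n * (x (Suc n) - x n)"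
proof (induction n)
  case 0 then show ?case by (simp add: algebra_simps)
next
  case (Suc n)
  have e: "pp (Suc n) * (mu * real (Suc n)) = lam * pp n" by (rule db)
  have "(\<Sum>i<Suc (Suc n). pp i * x i * (lam * x (Suc i) + mu * real i * x (i - 1) - (lam + mu * real i) * x i))
     = - lam * (\<Sum>i<n. pp i * (x (Suc i) - x i)^2) + lam * pp n * x n * (x (Suc n) - x n)
       + pp (Suc n) * x (Suc n) * (lam * x (Suc (Suc n)) + mu * real (Suc n) * x n - (lam + mu * real (Suc n)) * x (Suc n))"
    using Suc by simp
  also have "pp (Suc n) * x (Suc n) * (lam * x (Suc (Suc n)) + mu * real (Suc n) * x n - (lam + mu * real (Suc n)) * x (Suc n))
     = lam * pp (Suc n) * x (Suc n) * (x (Suc (Suc n)) - x (Suc n)) + (pp (Suc n) * (mu * real (Suc n))) * x (Suc n) * (x n - x (Suc n))"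
    by (simp add: algebra_simps)
  also have "\<dots> = lam * pp (Suc n) * x (Suc n) * (x (Suc (Suc n)) - x (Suc n)) + lam * pp n * x (Suc n) * (x n - x (Suc n))"
    by (simp only: e)
  finally show ?case by (simp add: algebra_simps power2_eq_square)
qed

context bdp begin

definition G :: "real \<Rightarrow> real \<Rightarrow> nat \<Rightarrow> real" where
  "G z t i = (1 - exp (- mu * t) + exp (- mu * t) * z) ^ i * exp (lam / mu * (1 - exp (- mu * t)) * (z - 1))"

lemma G_deriv: "((\<lambda>t. G z t i) has_real_derivative (\<Sum>k\<le>Suc i. q i k * G z t k)) (at t)"
proof -
  define p where "p = exp (- mu * t)"
  define B where "B = 1 - p + p * z"
  define Ex where "Ex = exp (lam / mu * (1 - p) * (z - 1))"
  have D: "((\<lambda>t. G z t i) has_real_derivative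
      (real i * B ^ (i - 1) * (mu * p * (1 - z)) * Ex + Ex * (lam * p * (z - 1)) * B ^ i)) (at t)"
  proof -
    have dB: "((\<lambda>t. 1 - exp (- mu * t) + exp (- mu * t) * z) has_real_derivative (mu * p * (1 - z))) (at t)"
      by (rule derivative_eq_intros refl | simp)+ (simp add: p_def algebra_simps)
    have dBi: "((\<lambda>t. (1 - exp (- mu * t) + exp (- mu * t) * z) ^ i) has_real_derivative
        (real i * B ^ (i - 1) * (mu * p * (1 - z)))) (at t)"
      using DERIV_power[OF dB, of i] by (simp add: B_def p_def mult.commute mult.left_commute)
    have dA: "((\<lambda>t. lam / mu * (1 - exp (- mu * t)) * (z - 1)) has_real_derivative (lam * p * (z - 1))) (at t)"
      by (rule derivative_eq_intros refl | simp)+ (use mu in \<open>simp add: p_def field_simps\<close>)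
    have dE: "((\<lambda>t. exp (lam / mu * (1 - exp (- mu * t)) * (z - 1))) has_real_derivative (Ex * (lam * p * (z - 1)))) (at t)"
      using DERIV_exp[THEN DERIV_chain2, OF dA] by (simp add: Ex_def p_def)
    show ?thesis unfolding G_def using DERIV_mult[OF dBi dE] by (simp add: B_def Ex_def p_def)
  qed
  have "(\<Sum>k\<le>Suc i. q i k * G z t k) = lam * G z t (Suc i) + mu * real i * G z t (i - 1) - (lam + mu * real i) * G z t i"
    by (rule qsum)
  also have "\<dots> = real i * B ^ (i - 1) * (mu * p * (1 - z)) * Ex + Ex * (lam * p * (z - 1)) * B ^ i"
  proof (cases i)
    case 0 then show ?thesis by (simp add: G_def B_def Ex_def p_def algebra_simps)
  next
    case (Suc m) then show ?thesis by (simp add: G_def B_def Ex_def p_def algebra_simps)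
  qed
  finally show ?thesis using D by simp
qed

definition pp :: "nat \<Rightarrow> real" where "pp i = (lam / mu) ^ i / fact i * exp (- (lam / mu))"

lemma pp_pos: "pp i > 0" unfolding pp_def using lam mu by simp

lemma aux_db: "(a::real) > 0 \<Longrightarrow> F > 0 \<Longrightarrow> m > 0 \<Longrightarrow> (c * X / (a * F) * E) * (m * a) = c * m * (X / F * E)"
  by (simp add: field_simps)

lemma pp_db: "pp (Suc i) * (mu * real (Suc i)) = lam * pp i"
proof -
  have "pp (Suc i) * (mu * real (Suc i)) = ((lam/mu) * (lam/mu)^i / (real (Suc i) * fact i) * exp(-(lam/mu))) * (mu * real (Suc i))"
    by (simp only: pp_def power_Suc fact_Suc)
  also have "\<dots> = (lam/mu) * mu * ((lam/mu)^i / fact i * exp(-(lam/mu)))"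
    by (rule aux_db) (use mu in auto)
  also have "\<dots> = lam * pp i" using mu by (simp add: pp_def)
  finally show ?thesis .
qed

lemma pp_lim: "pp \<longlonglongrightarrow> 0"
proof -
  have "(\<lambda>n. inverse (fact n) * (lam / mu) ^ n) \<longlonglongrightarrow> 0"
    by (rule summable_LIMSEQ_zero[OF summable_exp])
  then have "(\<lambda>n. inverse (fact n) * (lam / mu) ^ n * exp (- (lam / mu))) \<longlonglongrightarrow> 0 * exp (- (lam / mu))"
    by (intro tendsto_intros)
  then show ?thesis unfolding pp_def by (simp add: field_simps)
qed

context
  fixes z :: real assumes z0: "0 \<le> z" and z1: "z \<le> 1"
begin

lemma G_bounds: assumes t: "t \<ge> 0" shows "0 \<le> G z t i" "G z t i \<le> 1"
proof -
  define p where "p = exp (- mu * t)"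
  have p0: "0 < p" and p1: "p \<le> 1" unfolding p_def using t mu by auto
  have B0: "0 \<le> 1 - p + p * z" using p0 p1 z0 by (simp add: add_nonneg_nonneg)
  have B1: "1 - p + p * z \<le> 1" using p0 z1 by (simp add: mult_left_le)
  have e: "lam / mu * (1 - p) * (z - 1) \<le> 0"
    using lam mu p1 z1 by (intro mult_nonneg_nonpos) auto
  show "0 \<le> G z t i" unfolding G_def p_def[symmetric] using B0 by simp
  show "G z t i \<le> 1" unfolding G_def p_def[symmetric]
    using B0 B1 e by (intro mult_le_one power_le_one) auto
qed

lemma G0: "G z 0 i = z ^ i" unfolding G_def by simp

lemma G_cont: "continuous_on A (\<lambda>t. G z t i)"
  using G_deriv by (intro continuous_at_imp_continuous_on ballI DERIV_isCont) blast

definition w :: "real \<Rightarrow> nat \<Rightarrow> real" where "w s k = U z s k - G z s k"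

lemma w_bound: "s \<ge> 0 \<Longrightarrow> \<bar>w s k\<bar> \<le> 1"
  unfolding w_def using U_nonneg[OF z0 z1, of s k] U_le1[OF z0 z1, of s k] G_bounds[of s k] by auto

lemma w0: "w 0 k = 0" unfolding w_def using U0[OF z0 z1] G0 by simp

lemma w_deriv: "s > 0 \<Longrightarrow> ((\<lambda>s. w s k) has_real_derivative (\<Sum>j\<le>Suc k. q k j * w s j)) (at s)"
  unfolding w_def using DERIV_diff[OF U_deriv[OF z0 z1, of s k] G_deriv[of z k s]]
  by (simp add: sum_subtractf right_diff_distrib)

lemma w_cont: "continuous_on {0..t} (\<lambda>s. w s k)"
  unfolding w_def
  by (intro continuous_on_diff G_cont continuous_on_subset[OF U_contin[OF z0 z1]]) auto

lemma energy:
  assumes t: "t > 0" and that: "i \<le> n"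
  shows "pp i * (w t i)^2 \<le> 4 * lam * pp n * t"
proof -
  define V where "V s = (\<Sum>k<Suc n. pp k * (w s k)^2)" for s
  define V' where "V' s = (\<Sum>k<Suc n. pp k * (2 * w s k * (\<Sum>j\<le>Suc k. q k j * w s j)))" for s
  have dV: "(V has_real_derivative V' s) (at s)" if "s > 0" for s
  proof -
    have dT: "((\<lambda>s. pp k * (w s k)^2) has_real_derivative pp k * (2 * w s k * (\<Sum>j\<le>Suc k. q k j * w s j))) (at s)" for k
      by (rule DERIV_cong[OF DERIV_cmult[OF DERIV_power[OF w_deriv[OF that, of k], of 2], of "pp k"]])
         (simp del: sum.atMost_Suc)
    show ?thesis unfolding V_def V'_def by (rule DERIV_sum) (rule dT)
  qed
  have cV: "continuous_on {0..t} V" unfolding V_def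
    by (intro continuous_on_sum continuous_on_mult continuous_on_const continuous_on_power w_cont)
  obtain l \<xi> where xi: "0 < \<xi>" "\<xi> < t" and dl: "(V has_real_derivative l) (at \<xi>)" and eq: "V t - V 0 = (t - 0) * l"
  proof -
    have "\<And>x. 0 < x \<Longrightarrow> x < t \<Longrightarrow> V differentiable (at x)"
      using dV real_differentiable_def by blast
    then show ?thesis using MVT[OF t cV] that by blast
  qed
  have l: "l = V' \<xi>" using DERIV_unique[OF dl dV[OF xi(1)]] .
  have "V' \<xi> = 2 * (\<Sum>k<Suc n. pp k * w \<xi> k * (lam * w \<xi> (Suc k) + mu * real k * w \<xi> (k - 1) - (lam + mu * real k) * w \<xi> k))"
    unfolding V'_def qsum by (simp add: sum_distrib_left algebra_simps)
  also have "\<dots> = 2 * (- lam * (\<Sum>k<n. pp k * (w \<xi> (Suc k) - w \<xi> k)^2) + lam * pp n * w \<xi> n * (w \<xi> (Suc n) - w \<xi> n))"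
    by (simp only: dirichlet[of pp mu lam, OF pp_db])
  also have "\<dots> \<le> 2 * (lam * pp n * w \<xi> n * (w \<xi> (Suc n) - w \<xi> n))"
    using lam by (simp add: sum_nonneg pp_pos less_imp_le)
  also have "\<dots> \<le> 2 * (lam * pp n * 2)"
  proof -
    have "w \<xi> n * (w \<xi> (Suc n) - w \<xi> n) \<le> \<bar>w \<xi> n\<bar> * \<bar>w \<xi> (Suc n) - w \<xi> n\<bar>"
      by (metis abs_ge_self abs_mult)
    also have "\<dots> \<le> 1 * 2"
      using w_bound[of \<xi> n] w_bound[of \<xi> "Suc n"] xi
      by (intro mult_mono) auto
    finally have "w \<xi> n * (w \<xi> (Suc n) - w \<xi> n) \<le> 2" by simp
    then show ?thesis using lam pp_pos[of n] by (simp add: mult.assoc)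
  qed
  finally have "l \<le> 4 * lam * pp n" using l by simp
  moreover have "V 0 = 0" unfolding V_def by (simp add: w0)
  ultimately have "V t \<le> 4 * lam * pp n * t" using eq t
    by (simp add: mult.commute mult_left_mono)
  moreover have "pp i * (w t i)^2 \<le> V t"
  proof -
    have nn: "\<And>k. 0 \<le> pp k * (w t k)^2" using pp_pos by (simp add: less_imp_le)
    show ?thesis unfolding V_def using nn that by (intro member_le_sum) auto
  qed
  ultimately show ?thesis by linarith
qed

lemma U_eq_G: assumes t: "t \<ge> 0" shows "U z t i = G z t i"
proof (cases "t = 0")
  case True then show ?thesis using U0[OF z0 z1] G0 by simp
next
  case False
  then have t: "t > 0" using t by simp
  have "(\<lambda>n. 4 * lam * pp n * t) \<longlonglongrightarrow> 4 * lam * 0 * t"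
    by (intro tendsto_intros pp_lim)
  then have "(\<lambda>n. 4 * lam * pp n * t) \<longlonglongrightarrow> 0" by simp
  then have "pp i * (w t i)^2 \<le> 0"
    by (rule tendsto_lowerbound) (use energy[OF t] in \<open>auto simp: eventually_sequentially\<close>)
  then have "(w t i)^2 \<le> 0" using pp_pos[of i] by (simp add: mult_le_0_iff)
  then show ?thesis unfolding w_def by simp
qed

end

end

lemma powser_unique:
  fixes d :: "nat \<Rightarrow> real"
  assumes sd: "summable (\<lambda>j. \<bar>d j\<bar>)" and z: "\<And>z. 0 < z \<Longrightarrow> z \<le> 1 \<Longrightarrow> (\<Sum>j. d j * z ^ j) = 0"
  shows "d n = 0"
proof (induction n rule: less_induct)
  case (less n)
  define h where "h z = (\<Sum>j. d (j + n) * z ^ j)" for z :: real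
  have sd': "summable (\<lambda>j. d (j + n) * 1 ^ j)"
    using summable_ignore_initial_segment[OF summable_rabs_cancel[OF sd], of n] by simp
  have h0: "h z = 0" if "0 < z" "z \<le> 1" for z
  proof -
    have s: "summable (\<lambda>j. d j * z ^ j)"
      by (rule summable_comparison_test'[OF sd, of 0]) (use that in \<open>auto simp: abs_mult intro!: mult_left_le power_le_one\<close>)
    have s2: "summable (\<lambda>j. d (j + n) * z ^ j)"
    proof -
      have "summable (\<lambda>j. \<bar>d (j + n)\<bar>)" using summable_ignore_initial_segment[OF sd, of n] .
      then show ?thesis
        by (rule summable_comparison_test'[of _ 0]) (use that in \<open>auto simp: abs_mult intro!: mult_left_le power_le_one\<close>)
    qed
    have e1: "(\<Sum>j. d (j + n) * z ^ (j + n)) = (\<Sum>j. z ^ n * (d (j + n) * z ^ j))"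
      by (intro suminf_cong) (simp add: power_add algebra_simps)
    have e2: "(\<Sum>j. z ^ n * (d (j + n) * z ^ j)) = z ^ n * h z" unfolding h_def by (rule suminf_mult[OF s2])
    have "0 = (\<Sum>j. d j * z ^ j)" using z that by simp
    also have "\<dots> = (\<Sum>j. d (j + n) * z ^ (j + n)) + (\<Sum>j<n. d j * z ^ j)"
      by (rule suminf_split_initial_segment[OF s])
    also have "(\<Sum>j<n. d j * z ^ j) = 0" using less.IH by simp
    finally have "z ^ n * h z = 0" using e1 e2 by simp
    then show ?thesis using that by simp
  qed
  have "isCont h 0" unfolding h_def by (rule isCont_powser[OF sd']) simp
  then have "(h \<longlongrightarrow> h 0) (at_right 0)"
    by (simp add: isCont_def filterlim_at_split)
  moreover have "(h \<longlongrightarrow> 0) (at_right 0)"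
  proof (subst tendsto_cong)
    show "\<forall>\<^sub>F x in at_right 0. h x = 0"
      using eventually_at_right_less[of "0::real"] ev_lt[OF zero_less_one]
      by eventually_elim (auto intro: h0)
  qed simp
  ultimately have "h 0 = 0" using tendsto_unique[of "at_right (0::real)"] by fastforce
  then show ?case unfolding h_def by simp
qed

context bdp begin

definition pt where "pt t = exp (- mu * t)"
definition rt where "rt t = lam / mu * (1 - pt t)"
definition Ac where "Ac t i k = (if k \<le> i then real (i choose k) * pt t ^ k * (1 - pt t) ^ (i - k) else 0)"
definition Bc where "Bc t m = exp (- rt t) * rt t ^ m / fact m"
definition cc where "cc t i j = (\<Sum>k\<le>j. Ac t i k * Bc t (j - k))"

lemma pt_bounds: "t \<ge> 0 \<Longrightarrow> 0 < pt t \<and> pt t \<le> 1"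
  unfolding pt_def using mu by auto
lemma rt_nonneg: "t \<ge> 0 \<Longrightarrow> 0 \<le> rt t"
  unfolding rt_def using pt_bounds lam mu by auto

lemma Ac_nonneg: "t \<ge> 0 \<Longrightarrow> 0 \<le> Ac t i k"
  unfolding Ac_def using pt_bounds[of t] by simp

lemma Bc_nonneg: "t \<ge> 0 \<Longrightarrow> 0 \<le> Bc t m"
  unfolding Bc_def using rt_nonneg[of t] by simp

lemma cc_nonneg: "t \<ge> 0 \<Longrightarrow> 0 \<le> cc t i j"
  unfolding cc_def using Ac_nonneg Bc_nonneg by (simp add: sum_nonneg)

lemma cc_sums: assumes t: "t \<ge> 0" shows "(\<lambda>j. cc t i j * z ^ j) sums G z t i"
proof -
  define a where "a k = Ac t i k * z ^ k" for k
  define b where "b m = Bc t m * z ^ m" for m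
  have sa: "(\<lambda>k. norm (a k)) sums (\<Sum>k\<le>i. norm (a k))"
    by (rule sums_finite) (auto simp: a_def Ac_def)
  have sa2: "a sums (\<Sum>k\<le>i. a k)"
    by (rule sums_finite) (auto simp: a_def Ac_def)
  have eb: "(\<lambda>m. (rt t * z) ^ m /\<^sub>R fact m) sums exp (rt t * z)" by (rule exp_converges)
  have beq: "(\<lambda>m. exp (- rt t) * ((rt t * z) ^ m /\<^sub>R fact m)) = b"
    by (simp add: fun_eq_iff b_def Bc_def power_mult_distrib divide_inverse mult_ac)
  have sb2: "b sums (exp (- rt t) * exp (rt t * z))"
    using sums_mult[OF eb, of "exp (- rt t)"] by (simp only: beq)
  have "(\<lambda>m. \<bar>rt t * z\<bar> ^ m /\<^sub>R fact m) sums exp \<bar>rt t * z\<bar>" by (rule exp_converges)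
  then have sb0: "summable (\<lambda>m. \<bar>rt t * z\<bar> ^ m /\<^sub>R fact m * exp (- rt t))"
    by (intro summable_mult2 sums_summable)
  have "(\<lambda>m. \<bar>rt t * z\<bar> ^ m /\<^sub>R fact m * exp (- rt t)) = (\<lambda>m. norm (b m))"
    using rt_nonneg[OF t]
    by (simp add: fun_eq_iff b_def Bc_def abs_mult power_abs power_mult_distrib divide_inverse mult_ac)
  then have sb: "summable (\<lambda>m. norm (b m))" using sb0 by simp
  have C: "(\<lambda>j. \<Sum>k\<le>j. a k * b (j - k)) sums ((\<Sum>k. a k) * (\<Sum>k. b k))"
    by (rule Cauchy_product_sums[OF sums_summable[OF sa] sb])
  have eqj: "(\<Sum>k\<le>j. a k * b (j - k)) = cc t i j * z ^ j" for j
    unfolding cc_def sum_distrib_right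
  proof (intro sum.cong refl)
    fix k assume "k \<in> {..j}"
    then have "z ^ k * z ^ (j - k) = z ^ j" by (simp add: power_add[symmetric])
    then show "a k * b (j - k) = Ac t i k * Bc t (j - k) * z ^ j"
      unfolding a_def b_def by (metis mult.assoc mult.left_commute)
  qed
  have "(\<Sum>k. a k) = (\<Sum>k\<le>i. a k)" using sums_unique[OF sa2] by simp
  also have "\<dots> = (\<Sum>k\<le>i. real (i choose k) * (pt t * z) ^ k * (1 - pt t) ^ (i - k))"
    by (intro sum.cong) (auto simp: a_def Ac_def power_mult_distrib)
  also have "\<dots> = (pt t * z + (1 - pt t)) ^ i" by (rule binomial_ring[symmetric])
  finally have A: "(\<Sum>k. a k) = (pt t * z + (1 - pt t)) ^ i" .
  have "G z t i = (pt t * z + (1 - pt t)) ^ i * (exp (- rt t) * exp (rt t * z))"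
    unfolding G_def pt_def[symmetric] rt_def[symmetric]
    by (simp add: mult_exp_exp algebra_simps)
  then show ?thesis using C A sums_unique[OF sb2] by (simp add: eqj)
qed

lemma P_eq_cc: assumes t: "t \<ge> 0" shows "P t i j = cc t i j"
proof -
  define d where "d j = P t i j - cc t i j" for j
  have scc: "summable (\<lambda>j. cc t i j)" using sums_summable[OF cc_sums[OF t, of i 1]] by simp
  have sd: "summable (\<lambda>j. \<bar>d j\<bar>)"
    by (rule summable_comparison_test'[OF summable_add[OF rows_summable[OF t, of i] scc], of 0])
       (use nonneg[OF t, of i] cc_nonneg[OF t, of i] in \<open>simp add: d_def abs_le_iff\<close>)
  have "d j = 0"
  proof (rule powser_unique[OF sd])
    fix z :: real assume z: "0 < z" "z \<le> 1"
    have "(\<lambda>j. P t i j * z ^ j - cc t i j * z ^ j) sums (U z t i - G z t i)"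
      using sums_diff[OF summable_sums[OF U_summable[of z t i]] cc_sums[OF t]] z t
      by (simp add: U_def)
    moreover have "U z t i = G z t i" using U_eq_G[of z t i] z t by simp
    ultimately have "(\<lambda>j. P t i j * z ^ j - cc t i j * z ^ j) sums 0" by simp
    moreover have "(\<lambda>j. P t i j * z ^ j - cc t i j * z ^ j) = (\<lambda>j. d j * z ^ j)"
      by (simp add: d_def fun_eq_iff algebra_simps)
    ultimately show "(\<Sum>j. d j * z ^ j) = 0" using sums_unique by metis
  qed
  then show ?thesis by (simp add: d_def)
qed

lemma P_sums_G: "t \<ge> 0 \<Longrightarrow> (\<lambda>j. P t i j * z ^ j) sums G z t i"
  using cc_sums[of t i z] P_eq_cc by simp

end

lemma nn_pair:
  fixes Y Z :: "'a \<Rightarrow> nat" and f :: "nat \<Rightarrow> nat \<Rightarrow> real"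
  assumes Y: "Y \<in> M \<rightarrow>\<^sub>M count_space UNIV" and Z: "Z \<in> M \<rightarrow>\<^sub>M count_space UNIV"
  shows "(\<integral>\<^sup>+\<omega>. ennreal (f (Y \<omega>) (Z \<omega>)) \<partial>M)
       = (\<Sum>i. \<Sum>j. ennreal (f i j) * emeasure M {\<omega>\<in>space M. Y \<omega> = i \<and> Z \<omega> = j})"
proof -
  define A where "A i j = {\<omega>\<in>space M. Y \<omega> = i \<and> Z \<omega> = j}" for i j
  have As: "A i j \<in> sets M" for i j
  proof -
    have "A i j = (Y -` {i} \<inter> space M) \<inter> (Z -` {j} \<inter> space M)" unfolding A_def by auto
    then show ?thesis using measurable_sets[OF Y, of "{i}"] measurable_sets[OF Z, of "{j}"] by auto
  qed
  have pw: "ennreal (f (Y \<omega>) (Z \<omega>)) = (\<Sum>i. \<Sum>j. ennreal (f i j) * indicator (A i j) \<omega>)"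
    if "\<omega> \<in> space M" for \<omega>
  proof -
    have inner: "(\<Sum>j. ennreal (f i j) * indicator (A i j) \<omega>) = (if Y \<omega> = i then ennreal (f i (Z \<omega>)) else 0)" for i
    proof -
      have "(\<Sum>j. ennreal (f i j) * indicator (A i j) \<omega>) = (\<Sum>j\<in>{Z \<omega>}. ennreal (f i j) * indicator (A i j) \<omega>)"
        by (rule suminf_finite) (auto simp: A_def indicator_def)
      then show ?thesis using that by (simp add: A_def indicator_def)
    qed
    have "(\<Sum>i. \<Sum>j. ennreal (f i j) * indicator (A i j) \<omega>) = (\<Sum>i\<in>{Y \<omega>}. \<Sum>j. ennreal (f i j) * indicator (A i j) \<omega>)"
      by (rule suminf_finite) (auto simp: inner)
    then show ?thesis by (simp add: inner)
  qed
  have "(\<integral>\<^sup>+\<omega>. ennreal (f (Y \<omega>) (Z \<omega>)) \<partial>M) = (\<integral>\<^sup>+\<omega>. (\<Sum>i. \<Sum>j. ennreal (f i j) * indicator (A i j) \<omega>) \<partial>M)"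
    by (rule nn_integral_cong) (simp add: pw)
  also have "\<dots> = (\<Sum>i. \<integral>\<^sup>+\<omega>. (\<Sum>j. ennreal (f i j) * indicator (A i j) \<omega>) \<partial>M)"
    by (rule nn_integral_suminf) (use As in \<open>auto intro!: borel_measurable_suminf_order borel_measurable_times_ennreal\<close>)
  also have "\<dots> = (\<Sum>i. \<Sum>j. \<integral>\<^sup>+\<omega>. ennreal (f i j) * indicator (A i j) \<omega> \<partial>M)"
    by (intro suminf_cong nn_integral_suminf) (use As in auto)
  also have "\<dots> = (\<Sum>i. \<Sum>j. ennreal (f i j) * emeasure M (A i j))"
    by (intro suminf_cong nn_integral_cmult_indicator As)
  finally show ?thesis unfolding A_def .
qed

lemma meas_pair:
  fixes Y Z :: "'a \<Rightarrow> nat" and f :: "nat \<Rightarrow> nat \<Rightarrow> real"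
  assumes Y: "Y \<in> M \<rightarrow>\<^sub>M count_space UNIV" and Z: "Z \<in> M \<rightarrow>\<^sub>M count_space UNIV"
  shows "(\<lambda>\<omega>. f (Y \<omega>) (Z \<omega>)) \<in> borel_measurable M"
proof (rule measurable_compose_countable'[OF _ Y])
  fix i :: nat
  show "(\<lambda>\<omega>. f i (Z \<omega>)) \<in> borel_measurable M"
    by (rule measurable_compose[OF Z]) simp
qed simp

lemma pair_integral:
  fixes Y Z :: "'a \<Rightarrow> nat" and f :: "nat \<Rightarrow> nat \<Rightarrow> real"
  assumes M: "prob_space M"
    and Y: "Y \<in> M \<rightarrow>\<^sub>M count_space UNIV" and Z: "Z \<in> M \<rightarrow>\<^sub>M count_space UNIV"
    and nn: "\<And>i j. 0 \<le> f i j"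
    and rows: "\<And>i. (\<lambda>j. f i j * measure M {\<omega>\<in>space M. Y \<omega> = i \<and> Z \<omega> = j}) sums r i"
    and tot: "r sums S"
  shows "has_bochner_integral M (\<lambda>\<omega>. f (Y \<omega>) (Z \<omega>)) S"
proof -
  interpret prob_space M by (rule M)
  define m where "m i j = measure M {\<omega>\<in>space M. Y \<omega> = i \<and> Z \<omega> = j}" for i j
  have r0: "0 \<le> r i" for i
    by (rule sums_le[OF _ sums_zero rows[of i]]) (simp add: nn)
  have S0: "0 \<le> S"
    by (rule sums_le[OF _ sums_zero tot]) (simp add: r0)
  have "(\<integral>\<^sup>+\<omega>. ennreal (f (Y \<omega>) (Z \<omega>)) \<partial>M)
       = (\<Sum>i. \<Sum>j. ennreal (f i j) * emeasure M {\<omega>\<in>space M. Y \<omega> = i \<and> Z \<omega> = j})"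
    by (rule nn_pair[OF Y Z])
  also have "\<dots> = (\<Sum>i. \<Sum>j. ennreal (f i j * m i j))"
  proof -
    have e: "\<And>i j. ennreal (f i j) * emeasure M {\<omega>\<in>space M. Y \<omega> = i \<and> Z \<omega> = j} = ennreal (f i j * m i j)"
      unfolding m_def emeasure_eq_measure by (rule ennreal_mult'[OF nn, symmetric])
    show ?thesis by (simp only: e)
  qed
  also have "\<dots> = (\<Sum>i. ennreal (r i))"
  proof (intro suminf_cong)
    fix i
    have "(\<Sum>j. ennreal (f i j * m i j)) = ennreal (\<Sum>j. f i j * m i j)"
      unfolding m_def by (rule suminf_ennreal2[OF mult_nonneg_nonneg[OF nn measure_nonneg] sums_summable[OF rows[of i]]])
    also have "\<dots> = ennreal (r i)" using sums_unique[OF rows[of i]] unfolding m_def by simp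
    finally show "(\<Sum>j. ennreal (f i j * m i j)) = ennreal (r i)" .
  qed
  also have "\<dots> = ennreal S"
    using suminf_ennreal2[OF r0 sums_summable[OF tot]] sums_unique[OF tot] by simp
  finally have I: "(\<integral>\<^sup>+\<omega>. ennreal (f (Y \<omega>) (Z \<omega>)) \<partial>M) = ennreal S" .
  show ?thesis
    by (rule has_bochner_integral_nn_integral[OF meas_pair[OF Y Z] _ S0 I]) (simp add: nn)
qed

lemma hbi_one: "prob_space M \<Longrightarrow> has_bochner_integral M (\<lambda>_. 1::real) 1"
proof -
  assume M: "prob_space M"
  interpret prob_space M by (rule M)
  have "has_bochner_integral M (\<lambda>_. 1::real) (integral\<^sup>L M (\<lambda>_. 1::real))"
    by (rule has_bochner_integral_integrable) simp
  then show ?thesis by (simp add: prob_space)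
qed

lemma cov_lemma:
  assumes M: "prob_space M" and f: "has_bochner_integral M f 1" and g: "has_bochner_integral M g 1"
    and fg: "has_bochner_integral M (\<lambda>\<omega>. f \<omega> * g \<omega>) S"
  shows "covariance M f g = S - 1"
proof -
  have If: "integral\<^sup>L M f = 1" and Ig: "integral\<^sup>L M g = 1"
    using f g by (auto intro: has_bochner_integral_integral_eq)
  have h1: "has_bochner_integral M (\<lambda>\<omega>. f \<omega> * g \<omega> - f \<omega> - g \<omega> + 1) (S - 1 - 1 + 1)"
    by (intro has_bochner_integral_add has_bochner_integral_diff fg f g hbi_one M)
  have "has_bochner_integral M (\<lambda>\<omega>. (f \<omega> - 1) * (g \<omega> - 1)) (S - 1)"
    by (rule has_bochner_integral_cong[THEN iffD1, OF refl _ _ h1]) (simp_all add: algebra_simps)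
  then show ?thesis unfolding covariance_def If Ig by (rule has_bochner_integral_integral_eq)
qed

locale mp = bdp +
  fixes M :: "'a measure" and X :: "real \<Rightarrow> 'a \<Rightarrow> nat"
  assumes PS: "prob_space M"
    and SMP: "stationary_markov_process M X (pmf (poisson_pmf (lam / mu))) P"
begin

lemma pi_eq: "pmf (poisson_pmf (lam / mu)) i = pp i"
  unfolding pp_def using pmf_poisson[of "lam / mu" i] lam mu by simp

lemma Xmeas: "X t \<in> M \<rightarrow>\<^sub>M count_space UNIV"
  using SMP unfolding stationary_markov_process_def by blast

lemma m2: assumes tau: "\<tau> \<ge> 0"
  shows "measure M {\<omega>\<in>space M. X t \<omega> = i \<and> X (t + \<tau>) \<omega> = j} = pp i * P \<tau> i j"
proof -
  have H: "measure M {\<omega> \<in> space M. \<forall>k<length [i, j]. X (t + sum_list (take k [\<tau>])) \<omega> = [i, j] ! k}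
      = pmf (poisson_pmf (lam / mu)) ([i, j] ! 0) * (\<Prod>k<length [\<tau>]. P ([\<tau>] ! k) ([i, j] ! k) ([i, j] ! Suc k))"
  proof -
    have A: "\<forall>t ds ss. (\<forall>d\<in>set ds. 0 \<le> d) \<longrightarrow> length ss = Suc (length ds) \<longrightarrow>
        measure M {\<omega> \<in> space M. \<forall>k<length ss. X (t + sum_list (take k ds)) \<omega> = ss ! k}
          = pmf (poisson_pmf (lam / mu)) (ss ! 0) * (\<Prod>k<length ds. P (ds ! k) (ss ! k) (ss ! Suc k))"
      using SMP unfolding stationary_markov_process_def by blast
    show ?thesis using A[rule_format, of "[\<tau>]" "[i, j]" t] tau by simp
  qed
  have S: "{\<omega> \<in> space M. \<forall>k<length [i, j]. X (t + sum_list (take k [\<tau>])) \<omega> = [i, j] ! k}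
      = {\<omega>\<in>space M. X t \<omega> = i \<and> X (t + \<tau>) \<omega> = j}"
    by (auto simp: less_Suc_eq numeral_2_eq_2)
  show ?thesis using H unfolding S by (simp add: pi_eq)
qed

lemma m1: "measure M {\<omega>\<in>space M. X t \<omega> = i \<and> X t \<omega> = j} = (if j = i then pp i else 0)"
  using m2[of 0 t i j] by (simp add: P0)

lemma exp_sum: "(\<lambda>i. pp i * x ^ i) sums (exp (- (lam / mu)) * exp (lam / mu * x))"
proof -
  have "(\<lambda>i. (lam / mu * x) ^ i /\<^sub>R fact i) sums exp (lam / mu * x)" by (rule exp_converges)
  from sums_mult[OF this, of "exp (- (lam / mu))"] show ?thesis
    by (simp add: pp_def power_mult_distrib divide_inverse mult_ac)
qed

lemma EX: "has_bochner_integral M (\<lambda>\<omega>. exp 1 ^ X t \<omega>) (exp (- (lam / mu)) * exp (lam / mu * exp 1))"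
proof -
  have "has_bochner_integral M (\<lambda>\<omega>. (\<lambda>i j. exp 1 ^ i) (X t \<omega>) (X t \<omega>)) (exp (- (lam / mu)) * exp (lam / mu * exp 1))"
  proof (rule pair_integral[OF PS Xmeas Xmeas, where f = "\<lambda>i j. exp 1 ^ i" and r = "\<lambda>i. pp i * exp 1 ^ i"])
    fix i
    show "(\<lambda>j. exp 1 ^ i * measure M {\<omega> \<in> space M. X t \<omega> = i \<and> X t \<omega> = j}) sums (pp i * exp 1 ^ i)"
      unfolding m1 using sums_single[of i "\<lambda>j. pp i * exp 1 ^ i"]
      by (simp add: if_distrib mult.commute cong: if_cong)
  next
    show "(\<lambda>i. pp i * exp 1 ^ i) sums (exp (- (lam / mu)) * exp (lam / mu * exp 1))" by (rule exp_sum)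
  qed simp
  then show ?thesis by simp
qed

definition BB where "BB \<tau> = 1 - exp (- mu * \<tau>) + exp (- mu * \<tau>) * exp 1"
definition KK where "KK \<tau> = exp (lam / mu * (1 - exp (- mu * \<tau>)) * (exp 1 - 1))"

lemma EXX: assumes tau: "\<tau> \<ge> 0"
  shows "has_bochner_integral M (\<lambda>\<omega>. exp 1 ^ X t \<omega> * exp 1 ^ X (t + \<tau>) \<omega>)
     (exp (- (lam / mu)) * exp (lam / mu * (exp 1 * BB \<tau>)) * KK \<tau>)"
proof (rule pair_integral[OF PS Xmeas Xmeas, where f = "\<lambda>i j. exp 1 ^ i * exp 1 ^ j" and r = "\<lambda>i. pp i * (exp 1 * BB \<tau>) ^ i * KK \<tau>"])
  fix i
  have G: "G (exp 1) \<tau> i = BB \<tau> ^ i * KK \<tau>" unfolding G_def BB_def KK_def ..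
  have "(\<lambda>j. (exp 1 ^ i * pp i) * (P \<tau> i j * exp 1 ^ j)) sums ((exp 1 ^ i * pp i) * G (exp 1) \<tau> i)"
    by (rule sums_mult[OF P_sums_G[OF tau]])
  then show "(\<lambda>j. exp 1 ^ i * exp 1 ^ j * measure M {\<omega> \<in> space M. X t \<omega> = i \<and> X (t + \<tau>) \<omega> = j})
      sums (pp i * (exp 1 * BB \<tau>) ^ i * KK \<tau>)"
    unfolding m2[OF tau] G by (simp add: power_mult_distrib mult_ac)
next
  show "(\<lambda>i. pp i * (exp 1 * BB \<tau>) ^ i * KK \<tau>) sums (exp (- (lam / mu)) * exp (lam / mu * (exp 1 * BB \<tau>)) * KK \<tau>)"
    by (rule sums_mult2[OF exp_sum])
qed simp

definition c0 where "c0 = exp (- (lam / mu * (exp 1 - 1)))"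

lemma Lam_eq: "bd_Lambda lam mu X t \<omega> = c0 * exp 1 ^ X t \<omega>"
proof -
  have "exp (real (X t \<omega>)) = exp 1 ^ X t \<omega>" using exp_of_nat_mult[of "X t \<omega>" 1] by simp
  then show ?thesis unfolding bd_Lambda_def c0_def
    by (simp add: exp_diff exp_minus divide_inverse)
qed

lemma ELam: "has_bochner_integral M (bd_Lambda lam mu X t) 1"
proof -
  have "has_bochner_integral M (\<lambda>\<omega>. c0 * exp 1 ^ X t \<omega>) (c0 * (exp (- (lam / mu)) * exp (lam / mu * exp 1)))"
    by (rule has_bochner_integral_mult_right[OF EX])
  moreover have "c0 * (exp (- (lam / mu)) * exp (lam / mu * exp 1)) = 1"
  proof -
    have "c0 * (exp (- (lam / mu)) * exp (lam / mu * exp 1)) = exp (- (lam / mu * (exp 1 - 1)) + (- (lam / mu) + lam / mu * exp 1))"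
      unfolding c0_def by (simp only: mult_exp_exp)
    also have "- (lam / mu * (exp 1 - 1)) + (- (lam / mu) + lam / mu * exp 1) = 0" by (simp add: algebra_simps)
    finally show ?thesis by simp
  qed
  ultimately show ?thesis by (simp add: Lam_eq[abs_def])
qed

lemma cov_formula: assumes tau: "\<tau> \<ge> 0"
  shows "covariance M (bd_Lambda lam mu X t) (bd_Lambda lam mu X (t + \<tau>))
    = exp (lam / mu * (exp 1 - 1)^2 * exp (- mu * \<tau>)) - 1"
proof -
  define S where "S = exp (- (lam / mu)) * exp (lam / mu * (exp 1 * BB \<tau>)) * KK \<tau>"
  have "has_bochner_integral M (\<lambda>\<omega>. (c0 * c0) * (exp 1 ^ X t \<omega> * exp 1 ^ X (t + \<tau>) \<omega>)) ((c0 * c0) * S)"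
    unfolding S_def by (rule has_bochner_integral_mult_right[OF EXX[OF tau]])
  then have "has_bochner_integral M (\<lambda>\<omega>. bd_Lambda lam mu X t \<omega> * bd_Lambda lam mu X (t + \<tau>) \<omega>) ((c0 * c0) * S)"
    by (simp add: Lam_eq mult_ac)
  then have "covariance M (bd_Lambda lam mu X t) (bd_Lambda lam mu X (t + \<tau>)) = c0 * c0 * S - 1"
    by (rule cov_lemma[OF PS ELam ELam])
  also have "c0 * c0 * S = exp (lam / mu * (exp 1 - 1)^2 * exp (- mu * \<tau>))"
  proof -
    define r where "r = lam / mu"
    define p where "p = exp (- mu * \<tau>)"
    have "c0 * c0 * S = exp (- (r * (exp 1 - 1)) + - (r * (exp 1 - 1)) + - r + r * (exp 1 * (1 - p + p * exp 1)) + r * (1 - p) * (exp 1 - 1))"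
      unfolding c0_def S_def BB_def KK_def r_def[symmetric] p_def[symmetric] by (simp only: mult_exp_exp add.assoc)
    also have "- (r * (exp 1 - 1)) + - (r * (exp 1 - 1)) + - r + r * (exp 1 * (1 - p + p * exp 1)) + r * (1 - p) * (exp 1 - 1)
       = r * (exp 1 - 1)^2 * p" by (simp add: algebra_simps power2_eq_square)
    finally show ?thesis unfolding r_def p_def .
  qed
  finally show ?thesis .
qed

lemma cov_all: "covariance M (bd_Lambda lam mu X t) (bd_Lambda lam mu X (t + \<tau>))
    = exp (lam / mu * (exp 1 - 1)^2 * exp (- mu * \<bar>\<tau>\<bar>)) - 1"
proof (cases "\<tau> \<ge> 0")
  case True then show ?thesis using cov_formula[OF True, of t] by simp
next
  case False
  then have n: "- \<tau> \<ge> 0" by simp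
  have "covariance M (bd_Lambda lam mu X t) (bd_Lambda lam mu X (t + \<tau>))
      = covariance M (bd_Lambda lam mu X (t + \<tau>)) (bd_Lambda lam mu X (t + \<tau> + - \<tau>))"
  proof -
    have sw: "covariance M f g = covariance M g f" for f g :: "'a \<Rightarrow> real"
      unfolding covariance_def by (rule arg_cong[where f = "integral\<^sup>L M"]) (simp add: fun_eq_iff mult.commute)
    have tt: "t + \<tau> + - \<tau> = t" by simp
    show ?thesis unfolding tt by (rule sw)
  qed
  also have "\<dots> = exp (lam / mu * (exp 1 - 1)^2 * exp (- mu * (- \<tau>))) - 1"
    by (rule cov_formula[OF n])
  finally show ?thesis
  proof -
    have ab: "\<bar>\<tau>\<bar> = - \<tau>" using False by simp
    show "covariance M (bd_Lambda lam mu X t) (bd_Lambda lam mu X (t + \<tau>))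
      = exp (lam / mu * (exp 1 - 1)\<^sup>2 * exp (- mu * - \<tau>)) - 1 \<Longrightarrow> ?thesis"
      unfolding ab .
  qed
qed

lemma var_eq: "variance_of M (bd_Lambda lam mu X 0) = exp (lam / mu * (exp 1 - 1)^2) - 1"
proof -
  have z: "(0::real) + 0 = 0" by simp
  have "variance_of M (bd_Lambda lam mu X 0) = covariance M (bd_Lambda lam mu X 0) (bd_Lambda lam mu X 0)"
    unfolding variance_of_def covariance_def power2_eq_square ..
  also have "\<dots> = exp (lam / mu * (exp 1 - 1)^2 * exp (- mu * 0)) - 1"
    using cov_formula[of 0 0, OF order_refl] unfolding z .
  finally show ?thesis by (simp only: mult_zero_right exp_zero mult_1_right)
qed

end

theorem mainTheorem5:
  fixes M :: "'a measure" and X :: "real \<Rightarrow> 'a \<Rightarrow> nat"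
    and P :: "real \<Rightarrow> nat \<Rightarrow> nat \<Rightarrow> real" and lam mu :: real
  assumes "prob_space M"
    and "lam > 0" and "mu > 0"
    and "is_transition_function_of P (bd_Q lam mu)"
    and "stationary_markov_process M X (pmf (poisson_pmf (lam / mu))) P"
  shows "\<exists>c>0. \<forall>t \<tau>.
           c * exp (- mu * \<bar>\<tau>\<bar>) \<le> covariance M (bd_Lambda lam mu X t) (bd_Lambda lam mu X (t + \<tau>)) \<and>
           covariance M (bd_Lambda lam mu X t) (bd_Lambda lam mu X (t + \<tau>))
             \<le> variance_of M (bd_Lambda lam mu X 0) * exp (- mu * \<bar>\<tau>\<bar>)"
proof -
  have MP: "mp P lam mu M X" unfolding mp_def mp_axioms_def bdp_def using assms by blast
  interpret mp P lam mu M X by (rule MP)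
  define a where "a = lam / mu * (exp 1 - 1)^2"
  have a: "a > 0" unfolding a_def using assms(2,3) by simp
  show ?thesis
  proof (intro exI[of _ a] conjI allI a)
    fix t \<tau> :: real
    define x where "x = exp (- mu * \<bar>\<tau>\<bar>)"
    have x0: "0 \<le> x" and x1: "x \<le> 1" unfolding x_def using assms(3) by auto
    have C: "covariance M (bd_Lambda lam mu X t) (bd_Lambda lam mu X (t + \<tau>)) = exp (a * x) - 1"
      unfolding cov_all a_def x_def ..
    have V: "variance_of M (bd_Lambda lam mu X 0) = exp a - 1" unfolding var_eq a_def ..
    have "1 + a * x \<le> exp (a * x)" by (rule exp_ge_add_one_self)
    then show "a * exp (- mu * \<bar>\<tau>\<bar>) \<le> covariance M (bd_Lambda lam mu X t) (bd_Lambda lam mu X (t + \<tau>))"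
      unfolding C x_def[symmetric] by linarith
    have "exp ((1 - x) *\<^sub>R 0 + x *\<^sub>R a) \<le> (1 - x) * exp 0 + x * exp a"
      by (rule convex_onD[OF exp_convex]) (use x0 x1 in auto)
    then have "exp (a * x) - 1 \<le> (exp a - 1) * x" by (simp add: algebra_simps)
    then show "covariance M (bd_Lambda lam mu X t) (bd_Lambda lam mu X (t + \<tau>))
             \<le> variance_of M (bd_Lambda lam mu X 0) * exp (- mu * \<bar>\<tau>\<bar>)"
      unfolding C V x_def[symmetric] .
  qed
qed

end
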